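(* For $n\ge1$ and $\beta\ge0$ let $Z_{n,\beta}=\int_{\mathbb{R}^n}\exp(-\frac12\sum_{i=1}^n\lambda_i^2)\prod_{1\le i<j\le n}|\lambda_i-\lambda_j|^\beta\,\mathrm{d}\lambda_1\cdots\mathrm{d}\lambda_n$. Let $\beta=\beta_n\ge0$ and $\beta'=\beta'_n>0$ be sequences. (i) If $\beta\ll\beta'\ll n^{-2}$, then $Z_{n,\beta'}/Z_{n,\beta}\to1$ as $n\to\infty$. (ii) If $\beta\ll\beta'\ll n^{-1}$ and $\beta'\gg n^{-2}$, then $Z_{n,\beta'}\ll Z_{n,\beta}$.
   Context: For sequences $u=u_n$, $v=v_n$, $u\ll v$ means $u_n/v_n\to 0$ as $n\to\infty$ (and $u\gg v$ means $v\ll u$). In (i), when $\beta=0$ the condition $\beta\ll\beta'$ is understood trivially. *)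

theory Defs
  imports "HOL-Probability.Probability"
begin

text \<open>|x|^b with the convention 0^0 = 1 (Isabelle's powr has 0 powr 0 = 0).\<close>
definition abs_pow :: "real \<Rightarrow> real \<Rightarrow> real" where
  "abs_pow x b = (if b = 0 then 1 else \<bar>x\<bar> powr b)"

definition Zconst :: "nat \<Rightarrow> real \<Rightarrow> real" where
  "Zconst n \<beta> = integral\<^sup>L (PiM {..<n} (\<lambda>_. lborel))
     (\<lambda>x. exp (- (1/2) * (\<Sum>i<n. (x i)\<^sup>2)) *
          (\<Prod>p\<in>{(i,j). i < j \<and> j < n}. abs_pow (x (fst p) - x (snd p)) \<beta>))"

end

theory Submission
  imports Defs "HOL-Real_Asymp.Real_Asymp"
begin


lemma gamma_set_integrable:
  fixes s :: real assumes "s > 0"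
  shows "set_integrable lborel {0<..} (\<lambda>u. u powr (s - 1) / exp u)"
    and "(LINT u:{0<..}|lborel. u powr (s - 1) / exp u) = Gamma s"
proof -
  have hi: "((\<lambda>u. u powr (s - 1) / exp u) has_integral Gamma s) {0<..}"
  proof -
    have "((\<lambda>u. u powr (s - 1) / exp u) has_integral Gamma s) {0..}"
      by (rule Gamma_integral_real) fact
    then have "((\<lambda>u. if u \<in> {0<..} then u powr (s - 1) / exp u else 0) has_integral Gamma s) {0..}"
      by (rule has_integral_spike [of "{0}", rotated 2]) auto
    then show ?thesis by (subst (asm) has_integral_restrict) auto
  qed
  have ai: "(\<lambda>u. u powr (s - 1) / exp u) absolutely_integrable_on {0<..}"
    by (rule nonnegative_absolutely_integrable_1) (use hi in auto)
  show si: "set_integrable lborel {0<..} (\<lambda>u. u powr (s - 1) / exp u)"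
    using ai unfolding set_integrable_def
    by (subst (asm) integrable_completion) auto
  show "(LINT u:{0<..}|lborel. u powr (s - 1) / exp u) = Gamma s"
    using set_borel_integral_eq_integral(2)[OF si] hi by (simp add: integral_unique)
qed

lemma gauss_half:
  fixes t :: real assumes t: "t > -1"
  shows "set_integrable lborel {0<..} (\<lambda>y. y powr t * exp (-(y^2)/4))"
    and "(LINT y:{0<..}|lborel. y powr t * exp (-(y^2)/4)) = 2 powr t * Gamma ((t+1)/2)"
proof -
  define f where "f = (\<lambda>y::real. y powr t * exp (-(y^2)/4))"
  define g where "g = (\<lambda>u::real. 2 * sqrt u)"
  define g' where "g' = (\<lambda>u::real. 1 / sqrt u)"
  have s: "(t+1)/2 > 0" using t by simp
  have eq: "f (g u) * g' u = 2 powr t * (u powr ((t+1)/2 - 1) / exp u)" if "u > 0" for u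
  proof -
    have "f (g u) = (2 * sqrt u) powr t * exp (- u)"
      using that by (simp add: f_def g_def power_mult_distrib)
    also have "(2 * sqrt u) powr t = 2 powr t * u powr (t/2)"
      using that by (simp add: powr_mult sqrt_def root_powr_inverse powr_powr)
    finally have "f (g u) * g' u = 2 powr t * u powr (t/2) * exp (-u) / sqrt u"
      by (simp add: g'_def)
    also have "sqrt u = u powr (1/2)" using that by (simp add: powr_half_sqrt)
    also have "2 powr t * u powr (t/2) * exp (-u) / u powr (1/2)
        = 2 powr t * (u powr (t/2) / u powr (1/2)) / exp u"
      by (simp add: exp_minus field_simps)
    also have "u powr (t/2) / u powr (1/2) = u powr ((t+1)/2 - 1)"
      using that by (simp add: powr_diff [symmetric] field_simps)
    finally show ?thesis by simp
  qed
  have gi: "set_integrable lborel {0<..} (\<lambda>u. 2 powr t * (u powr ((t+1)/2 - 1) / exp u))"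
    using gamma_set_integrable(1)[OF s] by (rule set_integrable_mult_right)
  have gi': "set_integrable lborel (einterval 0 \<infinity>) (\<lambda>u. f (g u) * g' u)"
  proof -
    have "set_integrable lborel {0<..} (\<lambda>u. f (g u) * g' u) = set_integrable lborel {0<..} (\<lambda>u. 2 powr t * (u powr ((t+1)/2 - 1) / exp u))"
      by (rule set_integrable_cong) (auto simp: eq)
    with gi have "set_integrable lborel {0<..} (\<lambda>u. f (g u) * g' u)" by simp
    then show ?thesis by (simp add: zero_ereal_def)
  qed
  have deriv: "DERIV g x :> g' x" if "0 < ereal x" for x
    using that unfolding g_def g'_def
    by (auto intro!: derivative_eq_intros simp: field_simps)
  have lim0: "((ereal \<circ> g \<circ> real_of_ereal) \<longlongrightarrow> 0) (at_right 0)"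
    unfolding zero_ereal_def ereal_tendsto_simps g_def by real_asymp
  have limi: "((ereal \<circ> g \<circ> real_of_ereal) \<longlongrightarrow> \<infinity>) (at_left \<infinity>)"
    unfolding ereal_tendsto_simps g_def by real_asymp
  note R = interval_integral_substitution_nonneg[of 0 \<infinity> g g' f 0 \<infinity>, OF _ deriv _ _ _ _ lim0 limi gi']
  have c1: "isCont f (g x)" if "0 < ereal x" for x
    using that unfolding f_def g_def by (auto intro!: continuous_intros simp: zero_ereal_def)
  have c2: "isCont g' x" if "0 < ereal x" for x
    using that unfolding g'_def by (auto intro!: continuous_intros simp: zero_ereal_def)
  have R1: "set_integrable lborel (einterval 0 \<infinity>) f"
    and R2: "(LBINT x=0..\<infinity>. f x) = (LBINT x=0..\<infinity>. f (g x) * g' x)"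
    using R c1 c2 by (auto simp: f_def g'_def)
  show "set_integrable lborel {0<..} (\<lambda>y. y powr t * exp (-(y^2)/4))"
    using R1 by (simp add: f_def zero_ereal_def)
  have "(LBINT x=0..\<infinity>. f (g x) * g' x) = (LINT u:{0<..}|lborel. 2 powr t * (u powr ((t+1)/2 - 1) / exp u))"
    unfolding interval_lebesgue_integral_def
    by (simp add: zero_ereal_def, intro set_lebesgue_integral_cong) (auto simp: eq)
  also have "\<dots> = 2 powr t * Gamma ((t+1)/2)"
    using gamma_set_integrable(2)[OF s] set_integral_mult_right[of lborel "{0<..}" "2 powr t" "\<lambda>u. u powr ((t+1)/2 - 1) / exp u"]
    by simp
  finally show "(LINT y:{0<..}|lborel. y powr t * exp (-(y^2)/4)) = 2 powr t * Gamma ((t+1)/2)"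
    using R2 unfolding interval_lebesgue_integral_def by (simp add: f_def zero_ereal_def)
qed


lemma nd2: "normal_density 0 (sqrt 2) y = 1 / (2 * sqrt pi) * exp (-(y^2)/4)"
  by (simp add: normal_density_def real_sqrt_mult)

lemma mom_formula:
  fixes t :: real assumes t: "t > -1"
  shows "integrable lborel (\<lambda>y. normal_density 0 (sqrt 2) y * abs_pow y t)"
    and "(\<integral>y. normal_density 0 (sqrt 2) y * abs_pow y t \<partial>lborel) = 2 powr t * Gamma ((t+1)/2) / sqrt pi"
proof -
  define k where "k = (\<lambda>y::real. indicator {0<..} y * (y powr t * exp (-(y^2)/4)))"
  have ki: "integrable lborel k"
    using gauss_half(1)[OF t] unfolding k_def set_integrable_def by simp
  have kv: "integral\<^sup>L lborel k = 2 powr t * Gamma ((t+1)/2)"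
    using gauss_half(2)[OF t] unfolding k_def set_lebesgue_integral_def by simp
  have km: "k \<in> borel_measurable borel" using ki by auto
  have ki': "integrable lborel (\<lambda>y. k (-y))"
    using lborel_integrable_real_affine_iff[of "-1" k 0] ki by simp
  have kv': "integral\<^sup>L lborel (\<lambda>y. k (-y)) = 2 powr t * Gamma ((t+1)/2)"
    using lborel_integral_real_affine[of "-1" k 0] kv by simp
  have ae: "AE y in lborel. normal_density 0 (sqrt 2) y * abs_pow y t = 1 / (2 * sqrt pi) * (k y + k (-y))"
    using AE_lborel_singleton[of 0]
  proof eventually_elim
    case (elim y)
    then show ?case
      by (cases "y > 0") (auto simp: k_def nd2 abs_pow_def indicator_def)
  qed
  have ii: "integrable lborel (\<lambda>y. 1 / (2 * sqrt pi) * (k y + k (-y)))"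
    using ki ki' by auto
  show "integrable lborel (\<lambda>y. normal_density 0 (sqrt 2) y * abs_pow y t)"
  proof (rule integrable_cong_AE_imp[OF ii])
    show "(\<lambda>y. normal_density 0 (sqrt 2) y * abs_pow y t) \<in> borel_measurable lborel"
      unfolding abs_pow_def by measurable
    show "AE x in lborel. 1 / (2 * sqrt pi) * (k x + k (- x)) = normal_density 0 (sqrt 2) x * abs_pow x t"
      using ae by eventually_elim simp
  qed
  have "(\<integral>y. normal_density 0 (sqrt 2) y * abs_pow y t \<partial>lborel) = (\<integral>y. 1 / (2 * sqrt pi) * (k y + k (-y)) \<partial>lborel)"
  proof (rule integral_cong_AE)
    show "(\<lambda>y. normal_density 0 (sqrt 2) y * abs_pow y t) \<in> borel_measurable lborel"
      unfolding abs_pow_def by measurable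
    show "(\<lambda>y. 1 / (2 * sqrt pi) * (k y + k (- y))) \<in> borel_measurable lborel"
      using ii by auto
  qed (use ae in auto)
  also have "\<dots> = 1 / (2 * sqrt pi) * (integral\<^sup>L lborel k + integral\<^sup>L lborel (\<lambda>y. k (-y)))"
    using ki ki' by simp
  finally show "(\<integral>y. normal_density 0 (sqrt 2) y * abs_pow y t \<partial>lborel) = 2 powr t * Gamma ((t+1)/2) / sqrt pi"
    by (simp add: kv kv')
qed


definition mom :: "real \<Rightarrow> real" where
  "mom t = (\<integral>y. normal_density 0 (sqrt 2) y * abs_pow y t \<partial>lborel)"

lemma mom_small: "\<exists>t1. 0 < t1 \<and> t1 \<le> 1 \<and> mom t1 < 1"
proof -
  define gg where "gg = (\<lambda>t::real. exp (- (t * ln 2)) * rGamma ((t+1)/2))"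
  have nz: "(1/2::real) \<notin> \<int>\<^sub>\<le>\<^sub>0"
    by (auto elim!: nonpos_Ints_cases)
  have d1: "(rGamma has_field_derivative - rGamma (1/2) * Digamma (1/2)) (at ((\<lambda>t::real. (t+1)/2) 0))"
    using has_field_derivative_rGamma_no_nonpos_int[OF nz, of UNIV] by simp
  have d2: "((\<lambda>t::real. rGamma ((t+1)/2)) has_field_derivative (- rGamma (1/2) * Digamma (1/2)) * (1/2)) (at 0)"
    by (rule DERIV_chain2[where f=rGamma and g="\<lambda>t. (t+1)/2", OF d1]) (auto intro!: derivative_eq_intros)
  have d3: "((\<lambda>t::real. exp (- (t * ln 2))) has_field_derivative exp (- (0 * ln 2)) * (- (1 * ln 2))) (at 0)"
    by (rule DERIV_fun_exp) (auto intro!: derivative_eq_intros)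
  have D0: "DERIV gg 0 :> exp (- (0 * ln 2)) * (- (1 * ln 2)) * rGamma ((0+1)/2) + (- rGamma (1/2) * Digamma (1/2)) * (1/2) * exp (- (0 * ln 2))"
    unfolding gg_def by (rule DERIV_mult[OF d3 d2])
  have e: "exp (- (0 * ln 2)) * (- (1 * ln 2)) * rGamma ((0+1)/2) + (- rGamma (1/2) * Digamma (1/2)) * (1/2) * exp (- (0 * ln 2)) = euler_mascheroni / 2 * rGamma (1/2::real)"
  proof -
    have dg: "Digamma (1/2::real) = -euler_mascheroni - 2 * ln 2" using Digamma_one_half[where 'a=real] by simp
    show ?thesis unfolding dg by (simp add: field_simps)
  qed
  from D0 have D: "DERIV gg 0 :> euler_mascheroni / 2 * rGamma (1/2)" by (simp only: e)
  have pos: "euler_mascheroni / 2 * rGamma (1/2::real) > 0"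
    using euler_mascheroni_pos by (simp add: rGamma_inverse_Gamma Gamma_one_half_real)
  obtain d where d: "d > 0" "\<And>h. h > 0 \<Longrightarrow> h < d \<Longrightarrow> gg 0 < gg (0 + h)"
    using DERIV_pos_inc_right[OF D pos] by blast
  define t1 where "t1 = min (d/2) 1"
  have t1: "0 < t1" "t1 \<le> 1" "t1 < d" using d by (auto simp: t1_def)
  have "gg 0 < gg t1" using d(2)[of t1] t1 by simp
  then have lt0: "gg 0 < gg t1" .
  have g0: "gg 0 = 1 / sqrt pi" unfolding gg_def by (simp add: rGamma_inverse_Gamma Gamma_one_half_real inverse_eq_divide)
  have e2: "exp (-(t1 * ln 2)) = 1 / (2 powr t1)" unfolding powr_def by (simp add: exp_minus divide_inverse)
  have lt: "1 / sqrt pi < 1 / (2 powr t1) / Gamma ((t1+1)/2)"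
    using lt0 unfolding g0 by (simp only: gg_def e2 rGamma_inverse_Gamma divide_inverse)
  have gp: "Gamma ((t1+1)/2) > 0" using t1 by simp
  have "mom t1 = 2 powr t1 * Gamma ((t1+1)/2) / sqrt pi"
    unfolding mom_def using t1 by (intro mom_formula(2)) simp
  also have "\<dots> < 1"
  proof -
    have "True" by simp
    have pp: "0 < 2 powr t1 * Gamma ((t1+1)/2)" using gp by simp
    have "inverse (sqrt pi) < inverse (2 powr t1 * Gamma ((t1+1)/2))"
      using lt by (simp only: divide_divide_eq_left inverse_eq_divide)
    moreover have sp: "0 < sqrt pi" by simp
    ultimately have "2 powr t1 * Gamma ((t1+1)/2) < sqrt pi"
      using inverse_less_iff_less[OF sp pp] by blast

    then show ?thesis by (simp add: divide_less_eq)
  qed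
  finally show ?thesis using t1 by blast
qed




lemma abs_pow_convex:
  fixes y t s :: real
  assumes "0 \<le> t" "t \<le> s" "0 < s"
  shows "abs_pow y t \<le> (1 - t/s) + (t/s) * abs_pow y s"
proof (cases "t = 0")
  case True then show ?thesis by (simp add: abs_pow_def)
next
  case tn: False
  show ?thesis
  proof (cases "y = 0")
    case True then show ?thesis using assms tn by (simp add: abs_pow_def)
  next
    case False
    have "exp ((1 - t/s) *\<^sub>R 0 + (t/s) *\<^sub>R (s * ln \<bar>y\<bar>)) \<le> (1 - t/s) * exp 0 + (t/s) * exp (s * ln \<bar>y\<bar>)"
      by (rule convex_onD[OF exp_convex]) (use assms in auto)
    moreover have "(1 - t/s) *\<^sub>R 0 + (t/s) *\<^sub>R (s * ln \<bar>y\<bar>) = t * ln \<bar>y\<bar>"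
      using assms by simp
    ultimately show ?thesis using False tn assms by (simp add: abs_pow_def powr_def)
  qed
qed

lemma mom_int: "t > -1 \<Longrightarrow> integrable lborel (\<lambda>y. normal_density 0 (sqrt 2) y * abs_pow y t)"
  by (rule mom_formula(1))

lemma mom_0: "mom 0 = 1"
  by (simp add: mom_def abs_pow_def)

lemma mom_nonneg: "mom t \<ge> 0"
  unfolding mom_def by (rule integral_nonneg_AE) (auto simp: abs_pow_def)

lemma mom_convex:
  assumes "0 \<le> t" "t \<le> s" "0 < s"
  shows "mom t \<le> 1 - (t/s) * (1 - mom s)"
proof -
  have "mom t \<le> (\<integral>y. (1 - t/s) * normal_density 0 (sqrt 2) y + (t/s) * (normal_density 0 (sqrt 2) y * abs_pow y s) \<partial>lborel)"
    unfolding mom_def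
  proof (rule integral_mono)
    show "integrable lborel (\<lambda>y. normal_density 0 (sqrt 2) y * abs_pow y t)"
      using assms by (intro mom_int) simp
    show "integrable lborel (\<lambda>y. (1 - t/s) * normal_density 0 (sqrt 2) y + (t/s) * (normal_density 0 (sqrt 2) y * abs_pow y s))"
      using assms mom_int[of s] by auto
    fix y
    have "normal_density 0 (sqrt 2) y * abs_pow y t \<le> normal_density 0 (sqrt 2) y * ((1 - t/s) + (t/s) * abs_pow y s)"
      by (rule mult_left_mono[OF abs_pow_convex]) (use assms in auto)
    then show "normal_density 0 (sqrt 2) y * abs_pow y t \<le> (1 - t/s) * normal_density 0 (sqrt 2) y + (t/s) * (normal_density 0 (sqrt 2) y * abs_pow y s)"
      by (simp add: algebra_simps)
  qed
  also have "\<dots> = (1 - t/s) + (t/s) * mom s"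
    unfolding mom_def using assms mom_int[of s] by simp
  finally show ?thesis by (simp add: algebra_simps)
qed


abbreviation N01 :: "real measure" where
  "N01 \<equiv> density lborel (normal_density 0 1)"

definition PP :: "nat \<Rightarrow> (nat \<Rightarrow> real) measure" where
  "PP n = PiM {..<n} (\<lambda>_. N01)"

lemma ps_N01: "prob_space N01"
  by (rule prob_space_normal_density) simp

lemma sets_N01[simp, measurable_cong]: "sets N01 = sets borel" by simp

lemma ps_PP: "prob_space (PP n)"
  unfolding PP_def by (intro prob_space_PiM ps_N01)

lemma coord_distr: "i < n \<Longrightarrow> distr (PP n) N01 (\<lambda>x. x i) = N01"
  unfolding PP_def by (rule distr_PiM_component) (auto intro: ps_N01)

lemma coords_indep:
  assumes "n > 0"
  shows "prob_space.indep_vars (PP n) (\<lambda>_. N01) (\<lambda>i x. x i) {..<n}"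
proof -
  interpret prob_space "PP n" by (rule ps_PP)
  have rv: "random_variable N01 (\<lambda>x. x i)" if "i \<in> {..<n}" for i
    using that unfolding PP_def by measurable
  show ?thesis
  proof (subst indep_vars_iff_distr_eq_PiM'[OF _ rv])
    show "{..<n} \<noteq> {}" using assms by auto
    have "distr (PP n) (Pi\<^sub>M {..<n} (\<lambda>i. N01)) (\<lambda>x. \<lambda>i\<in>{..<n}. x i) = distr (PP n) (PP n) (\<lambda>x. x)"
      by (rule distr_cong) (auto simp: PP_def space_PiM PiE_def extensional_restrict)
    also have "\<dots> = PP n" by simp
    also have "\<dots> = (\<Pi>\<^sub>M i\<in>{..<n}. distr (PP n) N01 (\<lambda>x. x i))"
      unfolding PP_def[of n] by (rule PiM_cong) (auto simp: coord_distr[unfolded PP_def])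
    finally show "distr (PP n) (Pi\<^sub>M {..<n} (\<lambda>i. N01)) (\<lambda>x. \<lambda>i\<in>{..<n}. x i) = (\<Pi>\<^sub>M i\<in>{..<n}. distr (PP n) N01 (\<lambda>x. x i))" .
  qed auto
qed

lemma coord_distributed: "i < n \<Longrightarrow> distributed (PP n) lborel (\<lambda>x. x i) (normal_density 0 1)"
proof -
  assume i: "i < n"
  have "distr (PP n) lborel (\<lambda>x. x i) = distr (PP n) N01 (\<lambda>x. x i)"
    by (rule distr_cong) auto
  also have "\<dots> = N01" using coord_distr[OF i] .
  finally show ?thesis
    unfolding distributed_def using i by (auto simp: PP_def)
qed

lemma pair_indep:
  assumes "i < n" "j < n" "i \<noteq> j"
  shows "prob_space.indep_var (PP n) borel (\<lambda>x. x i) borel (\<lambda>x. x j)"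
proof -
  interpret prob_space "PP n" by (rule ps_PP)
  have ind: "indep_vars (\<lambda>_. N01) (\<lambda>i x. x i) {..<n}"
    using coords_indep assms by auto
  have "indep_var (PiM {i} (\<lambda>_. N01)) (\<lambda>\<omega>. restrict (\<lambda>k. \<omega> k) {i}) (PiM {j} (\<lambda>_. N01)) (\<lambda>\<omega>. restrict (\<lambda>k. \<omega> k) {j})"
    by (rule indep_var_restrict[OF ind]) (use assms in auto)
  then have "indep_var borel ((\<lambda>f. f i) \<circ> (\<lambda>\<omega>. restrict (\<lambda>k. \<omega> k) {i})) borel ((\<lambda>f. f j) \<circ> (\<lambda>\<omega>. restrict (\<lambda>k. \<omega> k) {j}))"
    by (rule indep_var_compose) measurable
  then show ?thesis by (simp add: comp_def)
qed

lemma diff_distributed: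
  assumes "i < n" "j < n" "i \<noteq> j"
  shows "distributed (PP n) lborel (\<lambda>x. x i - x j) (normal_density 0 (sqrt 2))"
proof -
  interpret prob_space "PP n" by (rule ps_PP)
  have "distributed (PP n) lborel (\<lambda>x. x i - x j) (normal_density (0 - 0) (sqrt (1\<^sup>2 + 1\<^sup>2)))"
    by (rule diff_indep_normal[OF pair_indep[OF assms]]) (use assms in \<open>auto intro: coord_distributed\<close>)
  then show ?thesis by simp
qed



lemma PP_density:
  "PP n = density (PiM {..<n} (\<lambda>_. lborel)) (\<lambda>x. \<Prod>i<n. ennreal (normal_density 0 1 (x i)))"
proof -
  interpret L: product_sigma_finite "\<lambda>_. lborel :: real measure" by standard
  have psf: "product_sigma_finite (\<lambda>_. N01)"
    unfolding product_sigma_finite_def using prob_space_imp_sigma_finite[OF ps_N01] by simp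
  have "density (PiM {..<n} (\<lambda>_. lborel)) (\<lambda>x. \<Prod>i<n. ennreal (normal_density 0 1 (x i))) = PiM {..<n} (\<lambda>_. N01)"
  proof (rule product_sigma_finite.PiM_eqI[OF psf])
    show "sets (density (PiM {..<n} (\<lambda>_. lborel)) (\<lambda>x. \<Prod>i<n. ennreal (normal_density 0 1 (x i)))) = sets (PiM {..<n} (\<lambda>_. N01))"
      unfolding sets_density by (rule sets_PiM_cong) auto
    fix A assume A: "\<And>i. i \<in> {..<n} \<Longrightarrow> A i \<in> sets N01"
    have Am: "A i \<in> sets lborel" if "i < n" for i using A[of i] that by simp
    have "emeasure (density (PiM {..<n} (\<lambda>_. lborel)) (\<lambda>x. \<Prod>i<n. ennreal (normal_density 0 1 (x i)))) (PiE {..<n} A)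
        = (\<integral>\<^sup>+x. (\<Prod>i<n. ennreal (normal_density 0 1 (x i))) * indicator (PiE {..<n} A) x \<partial>PiM {..<n} (\<lambda>_. lborel))"
      using Am by (intro emeasure_density) (auto intro!: sets_PiM_I_finite)
    also have "\<dots> = (\<integral>\<^sup>+x. (\<Prod>i<n. ennreal (normal_density 0 1 (x i)) * indicator (A i) (x i)) \<partial>PiM {..<n} (\<lambda>_. lborel))"
    proof (rule nn_integral_cong)
      fix x assume "x \<in> space (PiM {..<n} (\<lambda>_. lborel :: real measure))"
      then have x: "x \<in> extensional {..<n}" by (simp add: space_PiM PiE_def)
      have "indicator (PiE {..<n} A) x = (\<Prod>i<n. indicator (A i) (x i) :: ennreal)"
        using x by (auto simp: indicator_def PiE_def Pi_def)
      then show "(\<Prod>i<n. ennreal (normal_density 0 1 (x i))) * indicator (PiE {..<n} A) x = (\<Prod>i<n. ennreal (normal_density 0 1 (x i)) * indicator (A i) (x i))"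
        by (simp add: prod.distrib)
    qed
    also have "\<dots> = (\<Prod>i<n. \<integral>\<^sup>+y. ennreal (normal_density 0 1 y) * indicator (A i) y \<partial>lborel)"
      using Am by (intro L.product_nn_integral_prod) auto
    also have "\<dots> = (\<Prod>i<n. emeasure N01 (A i))"
      using Am by (intro prod.cong refl) (simp add: emeasure_density)
    finally show "emeasure (density (PiM {..<n} (\<lambda>_. lborel)) (\<lambda>x. \<Prod>i<n. ennreal (normal_density 0 1 (x i)))) (PiE {..<n} A) = (\<Prod>i\<in>{..<n}. emeasure N01 (A i))" .
  qed simp
  then show ?thesis by (simp add: PP_def)
qed


definition pairs :: "nat \<Rightarrow> (nat \<times> nat) set" where
  "pairs n = {(i,j). i < j \<and> j < n}"

lemma finite_pairs[simp]: "finite (pairs n)"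
  by (rule finite_subset[of _ "{..<n} \<times> {..<n}"]) (auto simp: pairs_def)

definition FF :: "nat \<Rightarrow> real \<Rightarrow> (nat \<Rightarrow> real) \<Rightarrow> real" where
  "FF n b x = (\<Prod>p\<in>pairs n. abs_pow (x (fst p) - x (snd p)) b)"

definition EE :: "nat \<Rightarrow> real \<Rightarrow> real" where
  "EE n b = (\<integral>x. FF n b x \<partial>PP n)"

lemma abs_pow_meas[measurable]: "(\<lambda>y. abs_pow y b) \<in> borel_measurable borel"
  unfolding abs_pow_def by measurable

lemma FF_meas[measurable]: "FF n b \<in> borel_measurable (PiM {..<n} (\<lambda>_. lborel))"
  unfolding FF_def
proof (rule borel_measurable_prod)
  fix p assume "p \<in> pairs n"
  then have "fst p \<in> {..<n}" "snd p \<in> {..<n}" by (auto simp: pairs_def)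
  then show "(\<lambda>x. abs_pow (x (fst p) - x (snd p)) b) \<in> borel_measurable (PiM {..<n} (\<lambda>_. lborel))"
    by (intro measurable_compose[OF _ abs_pow_meas] borel_measurable_diff measurable_component_singleton[THEN measurable_compose[OF _ measurable_ident_sets]]) auto
qed

lemma gauss_prod: "exp (- (1/2) * (\<Sum>i<n. (x i)\<^sup>2)) = sqrt (2*pi) ^ n * (\<Prod>i<n. normal_density 0 1 (x i))"
proof -
  have "(\<Prod>i<n. normal_density 0 1 (x i)) = (\<Prod>i<n. (1 / sqrt (2*pi)) * exp (- (x i)\<^sup>2 / 2))"
    by (simp add: normal_density_def)
  also have "\<dots> = (1 / sqrt (2*pi)) ^ n * (\<Prod>i<n. exp (- (x i)\<^sup>2 / 2))"
    by (simp only: prod.distrib prod_constant card_lessThan)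
  also have "(\<Prod>i<n. exp (- (x i)\<^sup>2 / 2)) = exp (\<Sum>i<n. - (x i)\<^sup>2 / 2)"
    by (simp add: exp_sum)
  finally have "sqrt (2*pi) ^ n * (\<Prod>i<n. normal_density 0 1 (x i)) = exp (\<Sum>i<n. - (x i)\<^sup>2 / 2)"
    by (simp add: power_one_over)
  also have "(\<Sum>i<n. - (x i)\<^sup>2 / 2) = - (1/2) * (\<Sum>i<n. (x i)\<^sup>2)"
    by (simp add: sum_distrib_left sum_negf)
  finally show ?thesis by simp
qed

lemma Z_EE: "Zconst n b = sqrt (2*pi) ^ n * EE n b"
proof -
  have d: "PP n = density (PiM {..<n} (\<lambda>_. lborel)) (\<lambda>x. ennreal (\<Prod>i<n. normal_density 0 1 (x i)))"
    unfolding PP_density by (simp add: prod_ennreal)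
  have "EE n b = (\<integral>x. (\<Prod>i<n. normal_density 0 1 (x i)) * FF n b x \<partial>PiM {..<n} (\<lambda>_. lborel))"
    unfolding EE_def d by (subst integral_density) (auto intro!: AE_I2 prod_nonneg)
  moreover have "Zconst n b = (\<integral>x. sqrt (2*pi) ^ n * ((\<Prod>i<n. normal_density 0 1 (x i)) * FF n b x) \<partial>PiM {..<n} (\<lambda>_. lborel))"
    unfolding Zconst_def FF_def pairs_def gauss_prod by (simp add: mult.assoc)
  ultimately show ?thesis by simp
qed


lemma pair_int:
  assumes "i < n" "j < n" "i \<noteq> j" "t > -1"
  shows "integrable (PP n) (\<lambda>x. abs_pow (x i - x j) t)"
    and "(\<integral>x. abs_pow (x i - x j) t \<partial>PP n) = mom t"
proof -
  note D = diff_distributed[OF assms(1-3)]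
  show "integrable (PP n) (\<lambda>x. abs_pow (x i - x j) t)"
    using distributed_integrable[OF D, of "\<lambda>y. abs_pow y t"] mom_int[OF assms(4)] by simp
  show "(\<integral>x. abs_pow (x i - x j) t \<partial>PP n) = mom t"
    using distributed_integral[OF D, of "\<lambda>y. abs_pow y t"] unfolding mom_def by simp
qed

lemma pair_ne0:
  assumes "i < n" "j < n" "i \<noteq> j"
  shows "AE x in PP n. x i \<noteq> x j"
proof -
  note D = diff_distributed[OF assms]
  have "AE y in density lborel (normal_density 0 (sqrt 2)). y \<noteq> 0"
    by (subst AE_density) (auto intro: AE_mp[OF AE_lborel_singleton[of 0]])
  then have "AE y in distr (PP n) lborel (\<lambda>x. x i - x j). y \<noteq> 0"
    unfolding distributed_distr_eq_density[OF D] .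
  from AE_distrD[OF _ this] show ?thesis
    using D by (auto simp: distributed_def)
qed

lemma AE_distinct: "AE x in PP n. \<forall>p\<in>pairs n. x (fst p) \<noteq> x (snd p)"
  by (rule AE_finite_allI[OF finite_pairs]) (auto simp: pairs_def intro!: pair_ne0)



lemma ln_lower: "(u::real) > 0 \<Longrightarrow> 2 * (1 - u powr (-1/2)) \<le> ln u"
proof -
  assume u: "u > 0"
  define v where "v = u powr (1/2)"
  have v: "v > 0" using u by (simp add: v_def)
  have "ln (1/v) \<le> 1/v - 1" using v by (intro ln_le_minus_one) simp
  then have "1 - 1/v \<le> ln v" using v by (simp add: ln_div)
  moreover have "ln u = 2 * ln v" using u by (simp add: v_def ln_powr)
  moreover have "u powr (-1/2) = 1/v" using u by (simp add: v_def powr_minus_divide)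
  ultimately show ?thesis by simp
qed

lemma abs_pow_exp: "d \<noteq> 0 \<Longrightarrow> abs_pow d b = exp (b * ln \<bar>d\<bar>)"
  by (simp add: abs_pow_def powr_def)

lemma EE_lower:
  assumes b: "b \<ge> 0" and int: "integrable (PP n) (FF n b)"
  shows "EE n b \<ge> exp (- b * real (card (pairs n)) * (2 * (mom (-1/2) - 1)))"
proof -
  interpret prob_space "PP n" by (rule ps_PP)
  define Y where "Y = (\<lambda>x. \<Sum>p\<in>pairs n. b * (2 * (1 - abs_pow (x (fst p) - x (snd p)) (-1/2))))"
  define a where "a = - b * real (card (pairs n)) * (2 * (mom (-1/2) - 1))"
  have pi: "integrable (PP n) (\<lambda>x. abs_pow (x (fst p) - x (snd p)) (-1/2))"
    and pv: "(\<integral>x. abs_pow (x (fst p) - x (snd p)) (-1/2) \<partial>PP n) = mom (-1/2)" if "p \<in> pairs n" for p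
    using that pair_int[of "fst p" n "snd p" "-1/2"] by (auto simp: pairs_def)
  have Yi: "integrable (PP n) Y"
    unfolding Y_def using pi by (intro Bochner_Integration.integrable_sum) auto
  have EY: "(\<integral>x. Y x \<partial>PP n) = a"
  proof -
    have "(\<integral>x. Y x \<partial>PP n) = (\<Sum>p\<in>pairs n. b * (2 * (1 - mom (-1/2))))"
      unfolding Y_def using pi pv by (subst Bochner_Integration.integral_sum) (auto simp: prob_space intro!: sum.cong)
    then show ?thesis by (simp add: a_def algebra_simps)
  qed
  have ae: "AE x in PP n. exp a * (1 + Y x - a) \<le> FF n b x"
    using AE_distinct
  proof eventually_elim
    case (elim x)
    have "Y x \<le> (\<Sum>p\<in>pairs n. b * ln \<bar>x (fst p) - x (snd p)\<bar>)"
      unfolding Y_def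
    proof (rule sum_mono)
      fix p assume p: "p \<in> pairs n"
      then have d: "x (fst p) - x (snd p) \<noteq> 0" using elim by auto
      have "2 * (1 - abs_pow (x (fst p) - x (snd p)) (-1/2)) \<le> ln \<bar>x (fst p) - x (snd p)\<bar>"
        using ln_lower[of "\<bar>x (fst p) - x (snd p)\<bar>"] d by (simp add: abs_pow_def)
      then show "b * (2 * (1 - abs_pow (x (fst p) - x (snd p)) (-1/2))) \<le> b * ln \<bar>x (fst p) - x (snd p)\<bar>"
        using b by (intro mult_left_mono)
    qed
    then have "exp (Y x) \<le> exp (\<Sum>p\<in>pairs n. b * ln \<bar>x (fst p) - x (snd p)\<bar>)" by simp
    also have "\<dots> = FF n b x"
      unfolding FF_def exp_sum[OF finite_pairs]
      using elim by (intro prod.cong refl) (simp add: abs_pow_exp)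
    finally have 1: "exp (Y x) \<le> FF n b x" .
    have "exp a * (1 + Y x - a) \<le> exp a * exp (Y x - a)"
      using exp_ge_add_one_self[of "Y x - a"] by (intro mult_left_mono) (simp_all add: algebra_simps)
    also have "\<dots> = exp (Y x)" by (simp add: exp_diff)
    finally show ?case using 1 by linarith
  qed
  have "(\<integral>x. exp a * (1 + Y x - a) \<partial>PP n) \<le> EE n b"
    unfolding EE_def
    by (rule integral_mono_AE[OF _ int ae]) (use Yi in auto)
  moreover have "(\<integral>x. exp a * (1 + Y x - a) \<partial>PP n) = exp a"
    using Yi EY by (simp add: prob_space algebra_simps)
  ultimately show ?thesis by (simp add: a_def)
qed



definition MM :: "nat \<Rightarrow> nat \<Rightarrow> (nat \<times> nat) set" where
  "MM n k = {p \<in> pairs n. (fst p + snd p) mod n = k}"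

lemma finite_MM[simp]: "finite (MM n k)"
  by (rule finite_subset[OF _ finite_pairs]) (auto simp: MM_def)

lemma mod_cancel_lt:
  fixes v a c n :: nat
  assumes "(v + a) mod n = (v + c) mod n" "a < n" "c < n"
  shows "a = c"
proof -
  have *: "a = c" if "(v + a) mod n = (v + c) mod n" "a < n" "c < n" "a \<le> c" for a c
  proof -
    have "n dvd (v + c) - (v + a)" using that by (subst mod_eq_dvd_iff_nat[symmetric]) auto
    then have "n dvd c - a" by simp
    moreover have "c - a < n" using that by linarith
    ultimately have "c - a = 0" using dvd_imp_le by (cases "c - a = 0") auto
    then show ?thesis using that by simp
  qed
  show ?thesis
  proof (cases "a \<le> c")
    case True then show ?thesis using * assms by blast
  next
    case False then show ?thesis using *[of c a] assms by simp
  qed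
qed

lemma MM_disj:
  assumes "p \<in> MM n k" "q \<in> MM n k" "p \<noteq> q"
  shows "{fst p, snd p} \<inter> {fst q, snd q} = {}"
proof (rule ccontr)
  obtain a b where p: "p = (a,b)" by (cases p)
  obtain c d where q: "q = (c,d)" by (cases q)
  have pp: "a < b" "b < n" "(a + b) mod n = k" using assms(1) by (auto simp: MM_def pairs_def p)
  have qq: "c < d" "d < n" "(c + d) mod n = k" using assms(2) by (auto simp: MM_def pairs_def q)
  assume "{fst p, snd p} \<inter> {fst q, snd q} \<noteq> {}"
  then have "a = c \<or> a = d \<or> b = c \<or> b = d" by (auto simp: p q)
  then show False
  proof (elim disjE)
    assume "a = c"
    then have "b = d" using mod_cancel_lt[of a b n d] pp qq by simp
    then show False using \<open>a = c\<close> assms(3) p q by simp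
  next
    assume "a = d"
    then have "b = c" using mod_cancel_lt[of a b n c] pp qq by (simp add: add.commute)
    then show False using \<open>a = d\<close> pp qq by simp
  next
    assume "b = c"
    then have "a = d" using mod_cancel_lt[of b a n d] pp qq by (simp add: add.commute)
    then show False using \<open>b = c\<close> pp qq by simp
  next
    assume "b = d"
    then have "a = c" using mod_cancel_lt[of b a n c] pp qq by (simp add: add.commute)
    then show False using \<open>b = d\<close> assms(3) p q by simp
  qed
qed

lemma card_MM_le: "card (MM n k) \<le> n"
proof -
  have "inj_on fst (MM n k)"
  proof (rule inj_onI)
    fix p q assume "p \<in> MM n k" "q \<in> MM n k" "fst p = fst q"
    then show "p = q" using MM_disj[of p n k q] by blast
  qed
  moreover have "fst ` MM n k \<subseteq> {..<n}" by (auto simp: MM_def pairs_def)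
  ultimately show ?thesis using card_inj_on_le[of fst "MM n k" "{..<n}"] by simp
qed

lemma card_fixed_le2:
  fixes n k :: nat
  shows "card {i. i < n \<and> (2*i) mod n = k} \<le> 2"
proof (cases "{i. i < n \<and> (2*i) mod n = k} = {}")
  case True then show ?thesis by (subst True) simp
next
  case False
  define U where "U = {i. i < n \<and> (2*i) mod n = k}"
  have fU: "finite U" by (simp add: U_def)
  define i0 where "i0 = Min U"
  have Une: "U \<noteq> {}" using False by (simp add: U_def)
  have i0: "i0 \<in> U" unfolding i0_def by (rule Min_in[OF fU Une])
  have "U \<subseteq> {i0, i0 + n div 2}"
  proof
    fix i assume i: "i \<in> U"
    have le: "i0 \<le> i" using i fU by (simp add: i0_def)
    have "(2*i) mod n = (2*i0) mod n" using i i0 by (simp add: U_def)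
    then have "n dvd 2*i - 2*i0" using le by (subst mod_eq_dvd_iff_nat[symmetric]) auto
    then obtain c where c: "2*i - 2*i0 = n * c" by blast
    have "i < n" using i by (simp add: U_def)
    then have "n * c < n * 2" using c le by linarith
    then have "c < 2" by simp
    then have "c = 0 \<or> c = 1" by auto
    then show "i \<in> {i0, i0 + n div 2}" using c le by auto
  qed
  then have "card U \<le> card {i0, i0 + n div 2}" by (intro card_mono) auto
  also have "\<dots> \<le> 2" by (simp add: card_insert_if)
  finally show ?thesis by (simp add: U_def)
qed

lemma card_MM_ge:
  assumes k: "k < n"
  shows "n \<le> 2 * card (MM n k) + 2"
proof -
  define V where "V = (\<Union>p\<in>MM n k. {fst p, snd p})"
  define U where "U = {i. i < n \<and> (2*i) mod n = k}"
  have "card V \<le> (\<Sum>p\<in>MM n k. card {fst p, snd p})"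
    unfolding V_def by (rule card_UN_le) simp
  also have "\<dots> \<le> (\<Sum>p\<in>MM n k. 2)"
    by (intro sum_mono) (simp add: card_insert_if)
  finally have cV: "card V \<le> 2 * card (MM n k)" by simp
  have cov: "{..<n} \<subseteq> V \<union> U"
  proof
    fix i assume i: "i \<in> {..<n}"
    show "i \<in> V \<union> U"
    proof (cases "(2*i) mod n = k")
      case True then show ?thesis using i by (simp add: U_def)
    next
      case False
      define j where "j = (n + k - i) mod n"
      have jn: "j < n" using k by (simp add: j_def)
      have ij: "(i + j) mod n = k"
      proof -
        have "(i + j) mod n = (i + (n + k - i)) mod n" by (simp add: j_def mod_add_right_eq)
        also have "i + (n + k - i) = n + k" using i by simp
        finally show ?thesis using k by simp
      qed
      have "j \<noteq> i" using ij False by (auto simp: mult_2)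
      show ?thesis
      proof (cases "i < j")
        case True
        then have "(i, j) \<in> MM n k" using jn ij by (simp add: MM_def pairs_def)
        then show ?thesis unfolding V_def by (intro UnI1 UN_I[of "(i,j)"]) auto
      next
        case False
        then have "(j, i) \<in> MM n k" using i ij \<open>j \<noteq> i\<close> by (simp add: MM_def pairs_def add.commute)
        then show ?thesis unfolding V_def by (intro UnI1 UN_I[of "(j,i)"]) auto
      qed
    qed
  qed
  have "n = card {..<n}" by simp
  also have "\<dots> \<le> card (V \<union> U)" using cov by (intro card_mono) (auto simp: V_def U_def)
  also have "\<dots> \<le> card V + card U" by (rule card_Un_le)
  also have "card U \<le> 2" unfolding U_def by (rule card_fixed_le2)
  finally show ?thesis using cV by linarith
qed


lemma amgm:
  fixes a :: "'k \<Rightarrow> real"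
  assumes K: "finite K" "K \<noteq> {}" and nn: "\<And>k. k \<in> K \<Longrightarrow> a k \<ge> 0"
  shows "(\<Prod>k\<in>K. a k) \<le> (\<Sum>k\<in>K. a k ^ card K) / card K"
proof (cases "\<exists>k\<in>K. a k = 0")
  case True
  then have "(\<Prod>k\<in>K. a k) = 0" using K by (simp add: prod_zero)
  moreover have "(\<Sum>k\<in>K. a k ^ card K) / card K \<ge> 0" using nn by (simp add: sum_nonneg)
  ultimately show ?thesis by simp
next
  case False
  then have pos: "\<And>k. k \<in> K \<Longrightarrow> a k > 0" using nn by force
  define m where "m = card K"
  have m: "m > 0" using K by (simp add: m_def card_gt_0_iff)
  have "(\<Prod>k\<in>K. a k) = exp (\<Sum>k\<in>K. ln (a k))"
    using pos by (simp add: exp_sum[OF K(1)])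
  also have "(\<Sum>k\<in>K. ln (a k)) = (\<Sum>k\<in>K. (1 / real m) *\<^sub>R (real m * ln (a k)))"
    using m by simp
  also have "exp \<dots> \<le> (\<Sum>k\<in>K. (1 / real m) * exp (real m * ln (a k)))"
    by (rule convex_on_sum[OF K exp_convex]) (use K m in \<open>auto simp: m_def\<close>)
  also have "\<dots> = (\<Sum>k\<in>K. a k ^ m) / m"
    using pos by (simp add: exp_of_nat_mult sum_divide_distrib)
  finally show ?thesis by (simp add: m_def)
qed

lemma abs_pow_power: "b \<ge> 0 \<Longrightarrow> (abs_pow d b) ^ n = abs_pow d (real n * b)"
proof (cases "b = 0 \<or> n = 0")
  case True then show ?thesis by (auto simp: abs_pow_def)
next
  case False
  then have nz: "real n * b \<noteq> 0" "b \<noteq> 0" "n \<noteq> 0" by auto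
  show ?thesis
  proof (cases "d = 0")
    case True then show ?thesis using nz by (simp add: abs_pow_def)
  next
    case False
    then have "(\<bar>d\<bar> powr b) ^ n = \<bar>d\<bar> powr (real n * b)" by (simp add: powr_power)
    then show ?thesis using nz by (simp add: abs_pow_def)
  qed
qed

lemma indep_MM:
  assumes n: "n > 0"
  shows "prob_space.indep_vars (PP n) (\<lambda>_. borel) (\<lambda>p x. abs_pow (x (fst p) - x (snd p)) t) (MM n k)"
proof -
  interpret prob_space "PP n" by (rule ps_PP)
  have ind: "indep_vars (\<lambda>_. N01) (\<lambda>i x. x i) {..<n}" using coords_indep[OF n] .
  have "indep_vars (\<lambda>p. PiM {fst p, snd p} (\<lambda>_. N01)) (\<lambda>p \<omega>. restrict (\<lambda>i. \<omega> i) {fst p, snd p}) (MM n k)"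
  proof (rule indep_vars_restrict[OF ind])
    show "\<And>p. p \<in> MM n k \<Longrightarrow> {fst p, snd p} \<subseteq> {..<n}" by (auto simp: MM_def pairs_def)
    show "disjoint_family_on (\<lambda>p. {fst p, snd p}) (MM n k)"
      unfolding disjoint_family_on_def using MM_disj by blast
  qed
  then have "indep_vars (\<lambda>_. borel) (\<lambda>p x. (\<lambda>f. abs_pow (f (fst p) - f (snd p)) t) (restrict (\<lambda>i. x i) {fst p, snd p})) (MM n k)"
    by (rule indep_vars_compose2) measurable
  then show ?thesis by simp
qed

lemma prod_MM:
  assumes n: "n > 0" and t: "t \<ge> 0"
  shows "integrable (PP n) (\<lambda>x. \<Prod>p\<in>MM n k. abs_pow (x (fst p) - x (snd p)) t)"
    and "(\<integral>x. (\<Prod>p\<in>MM n k. abs_pow (x (fst p) - x (snd p)) t) \<partial>PP n) = mom t ^ card (MM n k)"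
proof -
  interpret prob_space "PP n" by (rule ps_PP)
  have pi: "integrable (PP n) (\<lambda>x. abs_pow (x (fst p) - x (snd p)) t)"
    and pv: "(\<integral>x. abs_pow (x (fst p) - x (snd p)) t \<partial>PP n) = mom t" if "p \<in> MM n k" for p
    using that pair_int[of "fst p" n "snd p" t] t by (auto simp: MM_def pairs_def)
  show "integrable (PP n) (\<lambda>x. \<Prod>p\<in>MM n k. abs_pow (x (fst p) - x (snd p)) t)"
    by (rule indep_vars_integrable[OF finite_MM indep_MM[OF n]]) (use pi in auto)
  have "(\<integral>x. (\<Prod>p\<in>MM n k. abs_pow (x (fst p) - x (snd p)) t) \<partial>PP n) = (\<Prod>p\<in>MM n k. mom t)"
    by (subst indep_vars_lebesgue_integral[OF finite_MM indep_MM[OF n]]) (use pi pv in auto)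
  then show "(\<integral>x. (\<Prod>p\<in>MM n k. abs_pow (x (fst p) - x (snd p)) t) \<partial>PP n) = mom t ^ card (MM n k)"
    by simp
qed

lemma FF_group:
  assumes n: "n > 0"
  shows "FF n b x = (\<Prod>k<n. \<Prod>p\<in>MM n k. abs_pow (x (fst p) - x (snd p)) b)"
proof -
  have "(\<Prod>k<n. \<Prod>p\<in>{p \<in> pairs n. (fst p + snd p) mod n = k}. abs_pow (x (fst p) - x (snd p)) b) = FF n b x"
    unfolding FF_def by (rule prod.group) (use n in auto)
  then show ?thesis by (simp add: MM_def)
qed

lemma EE_upper:
  assumes n: "n > 0" and b: "b \<ge> 0"
  shows "integrable (PP n) (FF n b)"
    and "EE n b \<le> (\<Sum>k<n. mom (real n * b) ^ card (MM n k)) / n"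
proof -
  interpret prob_space "PP n" by (rule ps_PP)
  define G where "G = (\<lambda>k x. \<Prod>p\<in>MM n k. abs_pow (x (fst p) - x (snd p)) (real n * b))"
  have Gi: "integrable (PP n) (G k)" for k
    unfolding G_def using prod_MM(1)[OF n, of "real n * b"] b by simp
  have Gv: "(\<integral>x. G k x \<partial>PP n) = mom (real n * b) ^ card (MM n k)" for k
    unfolding G_def using prod_MM(2)[OF n, of "real n * b"] b by simp
  have bound: "FF n b x \<le> (\<Sum>k<n. G k x) / n" for x
  proof -
    have "FF n b x = (\<Prod>k<n. \<Prod>p\<in>MM n k. abs_pow (x (fst p) - x (snd p)) b)"
      by (rule FF_group[OF n])
    also have "\<dots> \<le> (\<Sum>k<n. (\<Prod>p\<in>MM n k. abs_pow (x (fst p) - x (snd p)) b) ^ card {..<n}) / card {..<n}"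
      by (rule amgm) (use n in \<open>auto intro!: prod_nonneg simp: abs_pow_def\<close>)
    also have "\<dots> = (\<Sum>k<n. G k x) / n"
      unfolding G_def using b by (simp add: prod_power_distrib abs_pow_power)
    finally show ?thesis .
  qed
  have FFm: "FF n b \<in> borel_measurable (PP n)"
  proof -
    have "sets (PP n) = sets (PiM {..<n} (\<lambda>_. lborel :: real measure))"
      unfolding PP_def by (rule sets_PiM_cong) auto
    then show ?thesis by (subst measurable_cong_sets[OF _ refl]) (assumption, rule FF_meas)
  qed
  have nn: "FF n b x \<ge> 0" for x
    unfolding FF_def by (intro prod_nonneg) (simp add: abs_pow_def)
  have Si: "integrable (PP n) (\<lambda>x. (\<Sum>k<n. G k x) / n)"
    by (intro integrable_divide Bochner_Integration.integrable_sum Gi)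
  show FFi: "integrable (PP n) (FF n b)"
  proof (rule Bochner_Integration.integrable_bound[OF Si FFm], rule AE_I2)
    fix x
    have "norm (FF n b x) = FF n b x" using nn[of x] by simp
    also have "\<dots> \<le> (\<Sum>k<n. G k x) / n" by (rule bound)
    also have "\<dots> \<le> norm ((\<Sum>k<n. G k x) / n)" by (simp only: real_norm_def abs_ge_self)
    finally show "norm (FF n b x) \<le> norm ((\<Sum>k<n. G k x) / n)" .
  qed
  have "EE n b \<le> (\<integral>x. (\<Sum>k<n. G k x) / n \<partial>PP n)"
    unfolding EE_def by (rule integral_mono[OF FFi Si bound])
  also have "\<dots> = (\<Sum>k<n. mom (real n * b) ^ card (MM n k)) / n"
    by (subst integral_divide_zero, subst Bochner_Integration.integral_sum) (auto simp: Gi Gv)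
  finally show "EE n b \<le> (\<Sum>k<n. mom (real n * b) ^ card (MM n k)) / n" .
qed



lemma card_pairs_le: "card (pairs n) \<le> n^2"
proof -
  have "card (pairs n) \<le> card ({..<n} \<times> {..<n})"
    by (rule card_mono) (auto simp: pairs_def)
  then show ?thesis by (simp add: power2_eq_square)
qed

lemma avg_bound:
  fixes n :: nat and x :: "nat \<Rightarrow> real"
  assumes n: "n > 0" and "\<And>k. k < n \<Longrightarrow> x k \<le> (B::real)"
  shows "(\<Sum>k<n. x k) / n \<le> B"
proof -
  have "(\<Sum>k<n. x k) \<le> (\<Sum>k<n. B)" by (rule sum_mono) (use assms in auto)
  then show ?thesis using n by (simp add: divide_le_eq mult.commute)
qed

lemma EE_lb:
  assumes n: "n > 0" and b: "b \<ge> 0"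
  shows "EE n b \<ge> exp (- (b * real n ^ 2 * \<bar>2 * (mom (-1/2) - 1)\<bar>))"
proof -
  define K where "K = 2 * (mom (-1/2) - 1)"
  have "b * real (card (pairs n)) * K \<le> b * real (card (pairs n)) * \<bar>K\<bar>"
    using b by (intro mult_left_mono) auto
  also have "\<dots> \<le> b * real n ^ 2 * \<bar>K\<bar>"
    using b card_pairs_le[of n] by (intro mult_right_mono mult_left_mono) (auto simp flip: of_nat_power)
  finally have le: "b * real (card (pairs n)) * K \<le> b * real n ^ 2 * \<bar>K\<bar>" .
  have "exp (- (b * real n ^ 2 * \<bar>K\<bar>)) \<le> exp (- b * real (card (pairs n)) * K)"
    using le by simp
  also have "\<dots> \<le> EE n b"
    unfolding K_def by (rule EE_lower[OF b EE_upper(1)[OF n b]])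
  finally show ?thesis by (simp add: K_def)
qed

lemma EE_pos: "n > 0 \<Longrightarrow> b \<ge> 0 \<Longrightarrow> EE n b > 0"
  using EE_lb[of n b] by (meson exp_gt_zero less_le_trans)

lemma EE_ub1:
  assumes n: "n > 0" and b: "b \<ge> 0" and nb: "real n * b \<le> 1"
  shows "EE n b \<le> exp (\<bar>mom 1 - 1\<bar> * real n ^ 2 * b)"
proof -
  define C where "C = \<bar>mom 1 - 1\<bar>"
  have C: "C \<ge> 0" by (simp add: C_def)
  have m1: "mom (real n * b) \<le> exp (C * (real n * b))"
  proof -
    have "mom (real n * b) \<le> 1 - (real n * b / 1) * (1 - mom 1)"
      by (rule mom_convex) (use n b nb in auto)
    also have "\<dots> \<le> 1 + C * (real n * b)"
    proof -
      have "(real n * b) * (mom 1 - 1) \<le> (real n * b) * C"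
        using n b by (intro mult_left_mono) (auto simp: C_def)
      then show ?thesis by (simp add: algebra_simps)
    qed
    also have "\<dots> \<le> exp (C * (real n * b))" by (rule exp_ge_add_one_self)
    finally show ?thesis .
  qed
  have "mom (real n * b) ^ card (MM n k) \<le> exp (C * real n ^ 2 * b)" if "k < n" for k
  proof -
    have "mom (real n * b) ^ card (MM n k) \<le> exp (C * (real n * b)) ^ card (MM n k)"
      by (rule power_mono[OF m1 mom_nonneg])
    also have "\<dots> \<le> exp (C * (real n * b)) ^ n"
      by (rule power_increasing[OF card_MM_le]) (use C n b in auto)
    also have "\<dots> = exp (C * real n ^ 2 * b)"
      by (simp add: exp_of_nat_mult[symmetric] power2_eq_square algebra_simps)
    finally show ?thesis .
  qed
  then have "(\<Sum>k<n. mom (real n * b) ^ card (MM n k)) / n \<le> exp (C * real n ^ 2 * b)"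
    by (rule avg_bound[OF n])
  then show ?thesis using EE_upper(2)[OF n b] by (simp add: C_def)
qed

lemma EE_ub2:
  assumes n: "n > 0" and b: "b \<ge> 0" and t1: "0 < t1" "t1 \<le> 1" and nb: "real n * b \<le> t1"
    and mt: "mom t1 < 1"
  shows "EE n b \<le> exp (- ((1 - mom t1) / t1) * (real n * b) * ((real n - 2) / 2))"
proof -
  define c where "c = (1 - mom t1) / t1"
  have m1: "mom (real n * b) \<le> 1 - c * (real n * b)"
    using mom_convex[of "real n * b" t1] n b nb t1 by (simp add: c_def algebra_simps)
  have ge0: "0 \<le> 1 - c * (real n * b)" using m1 mom_nonneg[of "real n * b"] by linarith
  have "mom (real n * b) ^ card (MM n k) \<le> exp (- c * (real n * b) * ((real n - 2) / 2))" if "k < n" for k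
  proof -
    have "mom (real n * b) ^ card (MM n k) \<le> (1 - c * (real n * b)) ^ card (MM n k)"
      by (rule power_mono[OF m1 mom_nonneg])
    also have "\<dots> \<le> exp (- (c * (real n * b))) ^ card (MM n k)"
      by (rule power_mono[OF _ ge0]) (use exp_ge_add_one_self[of "- (c * (real n * b))"] in simp)
    also have "\<dots> = exp (- (c * (real n * b)) * real (card (MM n k)))"
      by (simp add: exp_of_nat_mult[symmetric] mult.commute)
    also have "\<dots> \<le> exp (- c * (real n * b) * ((real n - 2) / 2))"
    proof -
      have "real n \<le> 2 * real (card (MM n k)) + 2"
        using card_MM_ge[OF that] by linarith
      moreover have "c * (real n * b) \<ge> 0" using mt t1 n b by (simp add: c_def)
      ultimately have "c * (real n * b) * ((real n - 2) / 2) \<le> c * (real n * b) * real (card (MM n k))"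
        by (intro mult_left_mono) auto
      then show ?thesis by simp
    qed
    finally show ?thesis .
  qed
  then have "(\<Sum>k<n. mom (real n * b) ^ card (MM n k)) / n \<le> exp (- c * (real n * b) * ((real n - 2) / 2))"
    by (rule avg_bound[OF n])
  then show ?thesis using EE_upper(2)[OF n b] by (simp add: c_def)
qed


lemma conv1:
  fixes b :: "nat \<Rightarrow> real"
  assumes b: "\<And>n. b n \<ge> 0" and lim: "(\<lambda>n. b n * real n ^ 2) \<longlonglongrightarrow> 0"
  shows "(\<lambda>n. EE n (b n)) \<longlonglongrightarrow> 1"
proof (rule tendsto_sandwich)
  define K where "K = \<bar>2 * (mom (-1/2) - 1)\<bar>"
  define C where "C = \<bar>mom 1 - 1\<bar>"
  have ev: "eventually (\<lambda>n. b n * real n ^ 2 < 1) sequentially"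
    using order_tendstoD(2)[OF lim, of 1] by simp
  have ev2: "eventually (\<lambda>n. n > 0 \<and> b n * real n ^ 2 < 1) sequentially"
    using ev eventually_gt_at_top[of 0] by eventually_elim auto
  show "eventually (\<lambda>n. exp (- (b n * real n ^ 2 * K)) \<le> EE n (b n)) sequentially"
    using ev2
  proof eventually_elim
    case (elim n)
    have "EE n (b n) \<ge> exp (- (b n * real n ^ 2 * \<bar>2 * (mom (-1/2) - 1)\<bar>))"
      using elim b[of n] by (intro EE_lb) auto
    then show ?case unfolding K_def .
  qed
  show "eventually (\<lambda>n. EE n (b n) \<le> exp (C * real n ^ 2 * b n)) sequentially"
    using ev2
  proof eventually_elim
    case (elim n)
    have "real n * b n \<le> b n * real n ^ 2"
      using elim b[of n] by (simp add: power2_eq_square mult_le_cancel_left1 mult.commute mult.left_commute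
           mult_right_mono[of 1 "real n" "b n", simplified])
    then have "real n * b n \<le> 1" using elim by linarith
    then show ?case using elim b[of n] EE_ub1[of n "b n"] by (simp add: C_def)
  qed
  show "(\<lambda>n. exp (- (b n * real n ^ 2 * K))) \<longlonglongrightarrow> 1"
    using tendsto_exp[OF tendsto_minus[OF tendsto_mult_right[OF lim, of K]]] by simp
  show "(\<lambda>n. exp (C * real n ^ 2 * b n)) \<longlonglongrightarrow> 1"
    using tendsto_exp[OF tendsto_mult_left[OF lim, of C]] by (simp add: mult_ac)
qed


lemma ratio_eq: "n > 0 \<Longrightarrow> Zconst n a / Zconst n b = EE n a / EE n b"
  by (simp add: Z_EE)

theorem lemma1p2:
  fixes \<beta> \<beta>' :: "nat \<Rightarrow> real"
  assumes "\<And>n. \<beta> n \<ge> 0" and "\<And>n. \<beta>' n > 0"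
  shows "(((\<lambda>n. \<beta> n / \<beta>' n) \<longlonglongrightarrow> 0) \<and>
           ((\<lambda>n. \<beta>' n / (1 / real n ^ 2)) \<longlonglongrightarrow> 0)
         \<longrightarrow> ((\<lambda>n. Zconst n (\<beta>' n) / Zconst n (\<beta> n)) \<longlonglongrightarrow> 1))
       \<and> (((\<lambda>n. \<beta> n / \<beta>' n) \<longlonglongrightarrow> 0) \<and>
           ((\<lambda>n. \<beta>' n / (1 / real n)) \<longlonglongrightarrow> 0) \<and>
           ((\<lambda>n. (1 / real n ^ 2) / \<beta>' n) \<longlonglongrightarrow> 0)
         \<longrightarrow> ((\<lambda>n. Zconst n (\<beta>' n) / Zconst n (\<beta> n)) \<longlonglongrightarrow> 0))"
proof (intro conjI impI; elim conjE)
  note b = assms(1) and b' = assms(2)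
  have evpos: "eventually (\<lambda>n. n > 0) sequentially" by (rule eventually_gt_at_top)
  have rat: "eventually (\<lambda>n. Zconst n (\<beta>' n) / Zconst n (\<beta> n) = EE n (\<beta>' n) / EE n (\<beta> n)) sequentially"
    using evpos by eventually_elim (rule ratio_eq)
  {
    assume h1: "(\<lambda>n. \<beta> n / \<beta>' n) \<longlonglongrightarrow> 0"
    assume h2: "(\<lambda>n. \<beta>' n / (1 / real n ^ 2)) \<longlonglongrightarrow> 0"
    have l2: "(\<lambda>n. \<beta>' n * real n ^ 2) \<longlonglongrightarrow> 0" using h2 by simp
    have ev: "eventually (\<lambda>n. \<beta> n / \<beta>' n < 1) sequentially"
      using order_tendstoD(2)[OF h1, of 1] by simp
    have l1: "(\<lambda>n. \<beta> n * real n ^ 2) \<longlonglongrightarrow> 0"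
    proof (rule tendsto_sandwich[OF _ _ tendsto_const l2])
      show "eventually (\<lambda>n. 0 \<le> \<beta> n * real n ^ 2) sequentially" using b by simp
      show "eventually (\<lambda>n. \<beta> n * real n ^ 2 \<le> \<beta>' n * real n ^ 2) sequentially"
        using ev
      proof eventually_elim
        case (elim n)
        then have "\<beta> n \<le> \<beta>' n" using b'[of n] by (simp add: divide_less_eq)
        then show ?case by (intro mult_right_mono) auto
      qed
    qed
    have "(\<lambda>n. EE n (\<beta>' n) / EE n (\<beta> n)) \<longlonglongrightarrow> 1 / 1"
      by (intro tendsto_divide conv1 l1 l2) (use b b' less_imp_le in auto)
    then show "(\<lambda>n. Zconst n (\<beta>' n) / Zconst n (\<beta> n)) \<longlonglongrightarrow> 1"
      using tendsto_cong[OF rat] by simp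
  }
  {
    assume g1: "(\<lambda>n. \<beta> n / \<beta>' n) \<longlonglongrightarrow> 0"
    assume g2: "(\<lambda>n. \<beta>' n / (1 / real n)) \<longlonglongrightarrow> 0"
    assume g3: "(\<lambda>n. (1 / real n ^ 2) / \<beta>' n) \<longlonglongrightarrow> 0"
    obtain t1 where t1: "0 < t1" "t1 \<le> 1" "mom t1 < 1" using mom_small by blast
    define c where "c = (1 - mom t1) / t1"
    have c: "c > 0" using t1 by (simp add: c_def)
    define K where "K = \<bar>2 * (mom (-1/2) - 1)\<bar>"
    have g2': "(\<lambda>n. real n * \<beta>' n) \<longlonglongrightarrow> 0" using g2 by (simp add: mult.commute)
    have ev1: "eventually (\<lambda>n. real n * \<beta>' n < t1) sequentially"
      using order_tendstoD(2)[OF g2' t1(1)] .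
    define w where "w = (\<lambda>n. \<beta>' n * real n ^ 2)"
    have winf: "filterlim w at_top sequentially"
    proof -
      have "eventually (\<lambda>n. 0 < (1 / real n ^ 2) / \<beta>' n) sequentially"
        using evpos by eventually_elim (use b' in simp)
      from filterlim_inverse_at_top[OF g3 this] show ?thesis
        unfolding w_def by (simp add: mult.commute)
    qed
    define h where "h = (\<lambda>n. c * ((real n - 2) / (2 * real n)) - (\<beta> n / \<beta>' n) * K)"
    have hlim: "h \<longlonglongrightarrow> c * (1/2) - 0 * K"
    proof -
      have "(\<lambda>n. (real n - 2) / (2 * real n)) \<longlonglongrightarrow> 1/2" by real_asymp
      then show ?thesis unfolding h_def
        by (intro tendsto_diff tendsto_mult tendsto_const g1)
    qed
    have prod: "filterlim (\<lambda>n. h n * w n) at_top sequentially"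
      by (rule filterlim_tendsto_pos_mult_at_top[OF hlim _ winf]) (use c in simp)
    have explim: "(\<lambda>n. exp (- (h n * w n))) \<longlonglongrightarrow> 0"
    proof -
      have "filterlim (\<lambda>n. - (h n * w n)) at_bot sequentially"
        using prod by (simp add: filterlim_uminus_at_top[symmetric])
      from filterlim_compose[OF exp_at_bot this] show ?thesis .
    qed
    show "(\<lambda>n. Zconst n (\<beta>' n) / Zconst n (\<beta> n)) \<longlonglongrightarrow> 0"
    proof (rule tendsto_sandwich[OF _ _ tendsto_const explim])
      show "eventually (\<lambda>n. 0 \<le> Zconst n (\<beta>' n) / Zconst n (\<beta> n)) sequentially"
        using rat evpos
      proof eventually_elim
        case (elim n)
        have "EE n (\<beta>' n) > 0" "EE n (\<beta> n) > 0"
          using elim b[of n] b'[of n] by (auto intro!: EE_pos)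
        then show ?case using elim by simp
      qed
      show "eventually (\<lambda>n. Zconst n (\<beta>' n) / Zconst n (\<beta> n) \<le> exp (- (h n * w n))) sequentially"
        using rat evpos ev1
      proof eventually_elim
        case (elim n)
        have up: "EE n (\<beta>' n) \<le> exp (- c * (real n * \<beta>' n) * ((real n - 2) / 2))"
          unfolding c_def using elim b'[of n] t1 by (intro EE_ub2) auto
        have lo: "EE n (\<beta> n) \<ge> exp (- (\<beta> n * real n ^ 2 * K))"
          unfolding K_def using elim b[of n] by (intro EE_lb) auto
        have pos: "EE n (\<beta> n) > 0" using elim b[of n] by (intro EE_pos) auto
        have "EE n (\<beta>' n) / EE n (\<beta> n) \<le> exp (- c * (real n * \<beta>' n) * ((real n - 2) / 2)) / exp (- (\<beta> n * real n ^ 2 * K))"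
          using up lo pos by (intro frac_le) auto
        also have "\<dots> = exp (- c * (real n * \<beta>' n) * ((real n - 2) / 2) + \<beta> n * real n ^ 2 * K)"
          by (simp add: exp_diff[symmetric])
        also have "- c * (real n * \<beta>' n) * ((real n - 2) / 2) + \<beta> n * real n ^ 2 * K = - (h n * w n)"
          using elim b'[of n] by (simp add: h_def w_def field_simps power2_eq_square)
        finally show ?case using elim by simp
      qed
    qed
  }
qed

end
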